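(* Let $\mathfrak{f}_r$ be the free $2$-step nilpotent Lie algebra of rank $r$, with center $\mathfrak{z}=\Lambda^2(V)$. (i) If $r\equiv0\pmod 4$, then every complex structure on $\mathfrak{f}_r$ is $2$-step. (ii) If $r\equiv3\pmod 4$, then every complex structure $J$ on $\mathfrak{f}_r$ is $3$-step, and moreover $\mathfrak{z}\cap J\mathfrak{z}$ has codimension $1$ in $\mathfrak{z}$.
   Context: For a real vector space $V$ of dimension $r$, the free $2$-step nilpotent Lie algebra of rank $r$ is $\mathfrak{f}_r=V\oplus\Lambda^2(V)$ with Lie bracket $[v,w]=v\wedge w$ for $v,w\in V$ and $\Lambda^2(V)$ central. A complex structure on a real Lie algebra $\mathfrak{g}$ is a linear map $J:\mathfrak{g}\to\mathfrak{g}$ with $J^2=-I$ and $N_J(x,y):=[x,y]+J([Jx,y]+[x,Jy])-[Jx,Jy]=0$ for all $x,y\in\mathfrak{g}$. Given such $J$, define inductively $\mathfrak{a}_0(J)=0$ and $\mathfrak{a}_\ell(J)=\{x\in\mathfrak{g}: [x,\mathfrak{g}]\subset\mathfrak{a}_{\ell-1}(J)\text{ and }[Jx,\mathfrak{g}]\subset\mathfrak{a}_{\ell-1}(J)\}$ for $\ell\ge1$. $J$ is called nilpotent if $\mathfrak{a}_t(J)=\mathfrak{g}$ for some positive integer $t$, and $t$-step if $t$ is the smallest such integer. *)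

theory Defs
  imports "HOL-Analysis.Analysis"
begin

definition nijenhuis :: "('a::real_vector \<Rightarrow> 'a \<Rightarrow> 'a) \<Rightarrow> ('a \<Rightarrow> 'a) \<Rightarrow> 'a \<Rightarrow> 'a \<Rightarrow> 'a" where
  "nijenhuis br J x y = br x y + J (br (J x) y + br x (J y)) - br (J x) (J y)"

definition complex_structure :: "'a::real_vector set \<Rightarrow> ('a \<Rightarrow> 'a \<Rightarrow> 'a) \<Rightarrow> ('a \<Rightarrow> 'a) \<Rightarrow> bool" where
  "complex_structure g br J \<longleftrightarrow>
     (\<forall>x\<in>g. J x \<in> g) \<and>
     (\<forall>x\<in>g. \<forall>y\<in>g. J (x + y) = J x + J y) \<and>
     (\<forall>x\<in>g. \<forall>c::real. J (c *\<^sub>R x) = c *\<^sub>R J x) \<and>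
     (\<forall>x\<in>g. J (J x) = - x) \<and>
     (\<forall>x\<in>g. \<forall>y\<in>g. nijenhuis br J x y = 0)"

fun aseries :: "'a::real_vector set \<Rightarrow> ('a \<Rightarrow> 'a \<Rightarrow> 'a) \<Rightarrow> ('a \<Rightarrow> 'a) \<Rightarrow> nat \<Rightarrow> 'a set" where
  "aseries g br J 0 = {0}"
| "aseries g br J (Suc l) =
     {x \<in> g. (\<forall>y\<in>g. br x y \<in> aseries g br J l) \<and> (\<forall>y\<in>g. br (J x) y \<in> aseries g br J l)}"

definition nilpotent_cs :: "'a::real_vector set \<Rightarrow> ('a \<Rightarrow> 'a \<Rightarrow> 'a) \<Rightarrow> ('a \<Rightarrow> 'a) \<Rightarrow> bool" where
  "nilpotent_cs g br J \<longleftrightarrow> (\<exists>t>0. aseries g br J t = g)"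

definition step_cs :: "'a::real_vector set \<Rightarrow> ('a \<Rightarrow> 'a \<Rightarrow> 'a) \<Rightarrow> ('a \<Rightarrow> 'a) \<Rightarrow> nat \<Rightarrow> bool" where
  "step_cs g br J t \<longleftrightarrow> 0 < t \<and> aseries g br J t = g \<and> (\<forall>s. 0 < s \<and> s < t \<longrightarrow> aseries g br J s \<noteq> g)"

text \<open>Lambda^2(V) is realised as the antisymmetric r x r matrices, with v \<and> w = v w^T - w v^T.
  Elements of f_r are pairs (v, w) with v in V and w antisymmetric.\<close>

definition wedge :: "real^'r \<Rightarrow> real^'r \<Rightarrow> real^'r^'r" where
  "wedge v w = (\<chi> i j. v $ i * w $ j - v $ j * w $ i)"

definition free2_carrier :: "((real^'r) \<times> (real^'r^'r)) set" where
  "free2_carrier = {(v, w). transpose w = - w}"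

definition free2_bracket :: "(real^'r) \<times> (real^'r^'r) \<Rightarrow> (real^'r) \<times> (real^'r^'r) \<Rightarrow> (real^'r) \<times> (real^'r^'r)" where
  "free2_bracket x y = (0, wedge (fst x) (fst y))"

definition free2_center :: "((real^'r) \<times> (real^'r^'r)) set" where
  "free2_center = {(0, w) | w. transpose w = - w}"

end

theory Submission
  imports Defs
begin


lemma wedge_antisym: "transpose (wedge v w) = - wedge v w"
  by (simp add: wedge_def transpose_def vec_eq_iff)

lemma wedge_zero_left[simp]: "wedge 0 v = 0" and wedge_zero_right[simp]: "wedge v 0 = 0"
  by (simp_all add: wedge_def vec_eq_iff)

lemma wedge_scale_left: "wedge (c *\<^sub>R v) w = c *\<^sub>R wedge v w"
  by (simp add: wedge_def vec_eq_iff algebra_simps)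

lemma wedge_dep:
  assumes "wedge u u' = 0" "u \<noteq> 0"
  shows "\<exists>c. u' = c *\<^sub>R u"
proof -
  obtain i where i: "u $ i \<noteq> 0" using assms(2) by (metis vec_eq_iff zero_index)
  have "\<And>j. u $ i * u' $ j - u $ j * u' $ i = 0"
  proof -
    fix j
    have "wedge u u' $ i $ j = 0" using assms(1) by simp
    then show "u $ i * u' $ j - u $ j * u' $ i = 0" by (simp add: wedge_def)
  qed
  define c where "c = u' $ i / u $ i"
  have "\<And>j. u' $ j = c * u $ j"
    using i \<open>\<And>j. u $ i * u' $ j - u $ j * u' $ i = 0\<close> unfolding c_def by (simp add: field_simps)
  then have "u' = c *\<^sub>R u" by (simp add: vec_eq_iff)
  then show ?thesis by blast
qed

lemma wedge_nonzero:
  assumes "CARD('r) \<ge> 2" "(v::real^'r) \<noteq> 0"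
  shows "\<exists>v'. wedge v v' \<noteq> 0"
proof -
  obtain i where i: "v $ i \<noteq> 0" using assms(2) by (metis vec_eq_iff zero_index)
  have "\<exists>j::'r. j \<noteq> i"
  proof (rule ccontr)
    assume "\<not> ?thesis"
    then have "(UNIV::'r set) \<subseteq> {i}" by auto
    then have "CARD('r) \<le> card {i}" by (intro card_mono) auto
    then have "CARD('r) \<le> 1" by simp
    then show False using assms(1) by simp
  qed
  then obtain j where j: "j \<noteq> i" by auto
  have "wedge v (axis j 1) $ i $ j = v $ i" using j by (simp add: wedge_def axis_def)
  then have "wedge v (axis j 1) \<noteq> 0" using i by auto
  then show ?thesis by blast
qed

lemma axis_comp: "axis k (x::real) $ i = (if i = k then x else 0)"
  unfolding axis_def by (rule vec_lambda_beta)
lemma wedge_comp: "wedge v w $ a $ b = v$a * w$b - v$b * w$a"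
  unfolding wedge_def by simp
lemma wedge_axis: "wedge (axis i (1::real)) (axis j 1) $ a $ b = (if i = a \<and> j = b then 1 else 0) - (if i = b \<and> j = a then (1::real) else 0)"
  unfolding wedge_comp axis_comp by (cases "i = a"; cases "j = b"; cases "i = b"; cases "j = a") simp_all

lemma antisym_span:
  fixes w :: "real^'r^'r"
  assumes "transpose w = - w"
  shows "w = (\<Sum>p\<in>UNIV. (w $ fst p $ snd p / 2) *\<^sub>R wedge (axis (fst p) 1) (axis (snd p) 1))"
proof -
  have wt: "\<And>a b. w $ b $ a = - w $ a $ b"
    proof -
    fix a b
    have "transpose w $ a $ b = (- w) $ a $ b" using assms by simp
    then show "w $ b $ a = - w $ a $ b" by (simp add: transpose_def)
  qed
  have comp: "\<And>a b. (\<Sum>p\<in>UNIV. (w $ fst p $ snd p / 2) *\<^sub>R wedge (axis (fst p) 1) (axis (snd p) 1)) $ a $ b = w $ a $ b"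
  proof -
    fix a b :: 'r
    have "(\<Sum>p\<in>UNIV. (w $ fst p $ snd p / 2) *\<^sub>R wedge (axis (fst p) 1) (axis (snd p) 1)) $ a $ b
        = (\<Sum>p\<in>UNIV. w $ fst p $ snd p / 2 * wedge (axis (fst p) 1) (axis (snd p) 1) $ a $ b)"
      by (simp add: sum_component)
    also have "\<dots> = (\<Sum>p\<in>UNIV. (if p = (a,b) then w $ a $ b / 2 else 0) - (if p = (b,a) then w $ b $ a / 2 else 0))"
    proof (intro sum.cong refl)
      fix p :: "'r \<times> 'r"
      obtain i j where p: "p = (i, j)" by (cases p)
      show "w $ fst p $ snd p / 2 * wedge (axis (fst p) 1) (axis (snd p) 1) $ a $ b =
         (if p = (a,b) then w $ a $ b / 2 else 0) - (if p = (b,a) then w $ b $ a / 2 else 0)"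
        unfolding p wedge_axis by (cases "i = a"; cases "j = b"; cases "i = b"; cases "j = a") auto
    qed
    also have "\<dots> = w $ a $ b / 2 - w $ b $ a / 2"
      by (simp add: sum_subtractf)
    also have "\<dots> = w $ a $ b" using wt[of a b] by simp
    finally show "(\<Sum>p\<in>UNIV. (w $ fst p $ snd p / 2) *\<^sub>R wedge (axis (fst p) 1) (axis (snd p) 1)) $ a $ b = w $ a $ b" .
  qed
  show ?thesis by (intro vec_eq_iff[THEN iffD2] allI) (rule comp[symmetric])
qed

lemma G_mem: "(a, b) \<in> free2_carrier \<longleftrightarrow> transpose b = - b"
  by (simp add: free2_carrier_def)

lemma Z_mem: "x \<in> free2_center \<longleftrightarrow> fst x = 0 \<and> transpose (snd x) = - snd x"
  by (cases x) (auto simp: free2_center_def)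

lemma br_eq: "free2_bracket x y = (0, wedge (fst x) (fst y))"
  by (simp add: free2_bracket_def)

definition antisyms :: "(real^'r^'r) set" where "antisyms = {w. transpose w = - w}"

lemma transpose_add': "transpose ((x::real^'r^'r) + y) = transpose x + transpose y"
  by (simp add: transpose_def vec_eq_iff)
lemma transpose_scale': "transpose (c *\<^sub>R (x::real^'r^'r)) = c *\<^sub>R transpose x"
  by (simp add: transpose_def vec_eq_iff)
lemma transpose_zero': "transpose (0::real^'r^'r) = 0"
  by (simp add: transpose_def vec_eq_iff)

lemma subspace_antisyms: "subspace antisyms"
  unfolding subspace_def antisyms_def
  by (simp add: transpose_add' transpose_scale' transpose_zero')

lemma G_times: "free2_carrier = (UNIV :: (real^'r) set) \<times> antisyms"
  by (auto simp: free2_carrier_def antisyms_def)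

lemma Z_times: "free2_center = ({0} :: (real^'r) set) \<times> antisyms"
  by (auto simp: free2_center_def antisyms_def)

lemma subspace_G: "subspace free2_carrier"
  unfolding G_times by (intro subspace_Times subspace_UNIV subspace_antisyms)

lemma subspace_Z: "subspace free2_center"
  unfolding Z_times by (intro subspace_Times subspace_0 subspace_antisyms) simp

lemma dim_G: "dim (free2_carrier :: ((real^'r) \<times> (real^'r^'r)) set) = CARD('r) + dim (antisyms :: (real^'r^'r) set)"
  unfolding G_times by (simp add: dim_Times subspace_antisyms)

lemma dim_Z: "dim (free2_center :: ((real^'r) \<times> (real^'r^'r)) set) = dim (antisyms :: (real^'r^'r) set)"
  unfolding Z_times by (simp add: dim_Times subspace_antisyms)




lemma even_dim_cs:
  fixes S :: "'a::euclidean_space set"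
  assumes S: "subspace S" and JS: "\<forall>x\<in>S. J x \<in> S"
    and Jadd: "\<forall>x\<in>S. \<forall>y\<in>S. J (x + y) = J x + J y"
    and Jsc: "\<forall>x\<in>S. \<forall>c::real. J (c *\<^sub>R x) = c *\<^sub>R J x"
    and JJ: "\<forall>x\<in>S. J (J x) = - x"
  shows "even (dim S)"
proof -
  have main: "\<And>T. subspace T \<Longrightarrow> T \<subseteq> S \<Longrightarrow> (\<forall>x\<in>T. J x \<in> T) \<Longrightarrow> even (dim S - dim T)"
  proof -
    fix T0 :: "'a set"
    show "subspace T0 \<Longrightarrow> T0 \<subseteq> S \<Longrightarrow> (\<forall>x\<in>T0. J x \<in> T0) \<Longrightarrow> even (dim S - dim T0)"
    proof (induction "dim S - dim T0" arbitrary: T0 rule: less_induct)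
      case (less T)
      show ?case
      proof (cases "S \<subseteq> T")
        case True
        then have "T = S" using less.prems by auto
        then show ?thesis by simp
      next
        case False
        then obtain x where x: "x \<in> S" "x \<notin> T" by auto
        have spT: "span T = T" using less.prems(1) by (simp add: span_eq_iff)
        define T' where "T' = span (insert (J x) (insert x T))"
        have JxS: "J x \<in> S" using JS x by auto
        have T'S: "T' \<subseteq> S" unfolding T'_def
          using S JxS x less.prems(2) by (simp add: span_minimal)
        have nx: "x \<notin> span T" by (subst spT) (rule x(2))
        have nJx: "J x \<notin> span (insert x T)"
        proof
          assume "J x \<in> span (insert x T)"
          then obtain k where k: "J x - k *\<^sub>R x \<in> T" using span_insert[of x T] spT by auto
          define t where "t = J x - k *\<^sub>R x"
          have tS: "t \<in> S" using k less.prems(2) t_def by auto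
          have Jt: "J t \<in> T" using less.prems(3) k t_def by auto
          have "J t = J (J x) + J ((- k) *\<^sub>R x)"
            unfolding t_def using Jadd JxS x S
            by (metis (no_types, lifting) scaleR_minus_left subspace_scale uminus_add_conv_diff diff_conv_add_uminus)
          also have "\<dots> = - x - k *\<^sub>R J x" using JJ Jsc[rule_format, OF x(1), of "-k"] x by simp
          finally have e: "J t = - x - k *\<^sub>R (t + k *\<^sub>R x)" unfolding t_def by simp
          have "(1 + k^2) *\<^sub>R x = - J t - k *\<^sub>R t"
            proof -
            have "J t + (k *\<^sub>R t + (k * k) *\<^sub>R x) + x = 0" using e by (simp add: algebra_simps)
            then show ?thesis by (simp add: algebra_simps power2_eq_square eq_neg_iff_add_eq_0)
          qed
          moreover have "- J t - k *\<^sub>R t \<in> T"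
            using Jt k t_def less.prems(1) by (simp add: subspace_diff subspace_neg subspace_scale)
          ultimately have "(1 + k^2) *\<^sub>R x \<in> T" by simp
          then have "inverse (1 + k^2) *\<^sub>R ((1 + k^2) *\<^sub>R x) \<in> T"
            using less.prems(1) subspace_scale by blast
          moreover have "1 + k^2 \<noteq> 0" by (smt (verit) zero_le_power2)
          ultimately show False using x by simp
        qed
        have dimT': "dim T' = dim T + 2"
          unfolding T'_def dim_span using nx nJx by (simp add: dim_insert)
        have subT': "subspace T'" unfolding T'_def by simp
        have JT': "\<forall>y\<in>T'. J y \<in> T'"
        proof
          fix y assume "y \<in> T'"
          then obtain a where a: "y - a *\<^sub>R J x \<in> span (insert x T)"
            unfolding T'_def using span_insert by blast
          then obtain b where b: "y - a *\<^sub>R J x - b *\<^sub>R x \<in> T"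
            using span_insert[of x T] spT by auto
          define t where "t = y - a *\<^sub>R J x - b *\<^sub>R x"
          have y: "y = t + (a *\<^sub>R J x + b *\<^sub>R x)" unfolding t_def by simp
          have tS: "t \<in> S" using b less.prems(2) t_def by auto
          have "J y = J t + (J (a *\<^sub>R J x) + J (b *\<^sub>R x))"
            unfolding y using Jadd tS JxS x S by (simp add: subspace_add subspace_scale)
          also have "\<dots> = J t + (- a *\<^sub>R x + b *\<^sub>R J x)" using Jsc JJ JxS x by simp
          finally have Jy: "J y = J t + (- a *\<^sub>R x + b *\<^sub>R J x)" .
          have "J t \<in> T" using less.prems(3) b t_def by auto
          then have "J t \<in> T'" unfolding T'_def by (meson insertCI span_superset subsetD subset_insertI2 span_mono)
          moreover have "x \<in> T'" "J x \<in> T'" unfolding T'_def by (simp_all add: span_base)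
          ultimately show "J y \<in> T'" unfolding Jy using subT'
            by (simp add: subspace_add subspace_scale subspace_diff)
        qed
        have "dim T' \<le> dim S" using T'S dim_subset by blast
        then have "dim S - dim T' < dim S - dim T" using dimT' by linarith
        from less.hyps[OF this subT' T'S JT'] have "even (dim S - dim T')" .
        moreover have "dim S - dim T = (dim S - dim T') + 2" using dimT' \<open>dim T' \<le> dim S\<close> by linarith
        ultimately show ?thesis by simp
      qed
    qed
  qed
  have J0: "J 0 = 0" using Jsc S subspace_0[OF S] by (metis scale_zero_left)
  have "even (dim S - dim ({0}::'a set))"
    by (rule main) (auto simp: S subspace_0 J0)
  then show ?thesis by simp
qed


declare transpose_zero'[simp]
declare aseries.simps[simp del]

lemma cs_facts:
  fixes J :: "(real^'r) \<times> (real^'r^'r) \<Rightarrow> (real^'r) \<times> (real^'r^'r)"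
  assumes cs: "complex_structure free2_carrier free2_bracket J" and r2: "CARD('r) \<ge> 2"
  shows "\<not>(\<exists>x\<in>free2_center. fst (J x) \<noteq> 0) \<Longrightarrow> step_cs free2_carrier free2_bracket J 2 \<and> even CARD('r)"
    and "(\<exists>x\<in>free2_center. fst (J x) \<noteq> 0) \<Longrightarrow> step_cs free2_carrier free2_bracket J 3
           \<and> dim (free2_center :: ((real^'r) \<times> (real^'r^'r)) set) = dim (free2_center \<inter> J ` free2_center) + 1
           \<and> odd CARD('r)"
proof -
  let ?G = "free2_carrier :: ((real^'r) \<times> (real^'r^'r)) set"
  let ?Z = "free2_center :: ((real^'r) \<times> (real^'r^'r)) set"
  let ?br = "free2_bracket :: (real^'r) \<times> (real^'r^'r) \<Rightarrow> _"
  have JG: "\<forall>x\<in>?G. J x \<in> ?G" and Jadd: "\<forall>x\<in>?G. \<forall>y\<in>?G. J (x + y) = J x + J y"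
    and Jsc: "\<forall>x\<in>?G. \<forall>c::real. J (c *\<^sub>R x) = c *\<^sub>R J x" and JJ: "\<forall>x\<in>?G. J (J x) = - x"
    and N: "\<forall>x\<in>?G. \<forall>y\<in>?G. nijenhuis ?br J x y = 0"
    using cs unfolding complex_structure_def by auto
  have sG: "subspace ?G" by (rule subspace_G)
  have sZ: "subspace ?Z" by (rule subspace_Z)
  have ZG: "?Z \<subseteq> ?G" by (auto simp: Z_mem G_mem)
  have J0: "J 0 = 0" using Jsc subspace_0[OF sG] by (metis scale_zero_left)
  have Jdiff: "\<And>x y. x \<in> ?G \<Longrightarrow> y \<in> ?G \<Longrightarrow> J (x - y) = J x - J y"
  proof -
    fix x y assume xy: "x \<in> ?G" "y \<in> ?G"
    have m: "(-1) *\<^sub>R y \<in> ?G" using xy sG by (metis subspace_scale)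
    have "J (x - y) = J (x + (-1) *\<^sub>R y)" by simp
    also have "\<dots> = J x + J ((-1) *\<^sub>R y)" using Jadd xy m by blast
    also have "\<dots> = J x - J y" using Jsc[rule_format, OF xy(2), of "-1"] by simp
    finally show "J (x - y) = J x - J y" .
  qed
  have keyN: "\<And>x y. x \<in> ?Z \<Longrightarrow> y \<in> ?G \<Longrightarrow> J (?br (J x) y) = ?br (J x) (J y)"
  proof -
    fix x y assume x: "x \<in> ?Z" and y: "y \<in> ?G"
    have fx: "fst x = 0" using x by (simp add: Z_mem)
    have b1: "?br x y = 0" "?br x (J y) = 0" by (simp_all add: br_eq fx zero_prod_def)
    have "nijenhuis ?br J x y = 0" using N ZG x y by auto
    then have "0 + J (?br (J x) y + 0) - ?br (J x) (J y) = 0"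
      unfolding nijenhuis_def by (simp only: b1)
    then show "J (?br (J x) y) = ?br (J x) (J y)" by simp
  qed
  have key1: "\<And>x y. x \<in> ?Z \<Longrightarrow> y \<in> ?Z \<Longrightarrow> wedge (fst (J x)) (fst (J y)) = 0"
  proof -
    fix x y assume xy: "x \<in> ?Z" "y \<in> ?Z"
    have fy: "fst y = 0" using xy by (simp add: Z_mem)
    have b0: "?br (J x) y = 0" by (simp add: br_eq fy zero_prod_def)
    have yG: "y \<in> ?G" using xy(2) ZG by auto
    have "?br (J x) (J y) = J (?br (J x) y)" using keyN[OF xy(1) yG] by (rule sym)
    also have "\<dots> = 0" using b0 J0 by simp
    finally have "?br (J x) (J y) = 0" .
    then show "wedge (fst (J x)) (fst (J y)) = 0" by (simp add: br_eq zero_prod_def)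
  qed
  have key2: "\<And>x v. x \<in> ?Z \<Longrightarrow> fst (J (0, wedge (fst (J x)) v)) = 0"
  proof -
    fix x v assume x: "x \<in> ?Z"
    have y: "(v, 0) \<in> ?G" by (simp add: G_mem)
    have "J (?br (J x) (v, 0)) = ?br (J x) (J (v, 0))" using keyN[OF x y] .
    then have "J (0, wedge (fst (J x)) v) = (0, wedge (fst (J x)) (fst (J (v, 0))))"
      by (simp add: br_eq)
    then show "fst (J (0, wedge (fst (J x)) v)) = 0" by simp
  qed
  have as_suc: "\<And>l. aseries ?G ?br J (Suc l) = {x\<in>?G. (\<forall>v. (0, wedge (fst x) v) \<in> aseries ?G ?br J l)
        \<and> (\<forall>v. (0, wedge (fst (J x)) v) \<in> aseries ?G ?br J l)}"
  proof -
    fix l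
    have "\<And>v. (v, 0) \<in> ?G" by (simp add: G_mem)
    then show "?thesis l"
      by (auto simp: br_eq aseries.simps(2)) (metis fst_conv)+
  qed
  define Z1 where "Z1 = {x\<in>?Z. fst (J x) = 0}"
  have wz1: "\<And>a::real^'r. \<forall>v. wedge a v = 0 \<Longrightarrow> a = 0" using wedge_nonzero[OF r2] by blast
  have wz: "\<And>a::real^'r. (\<forall>v. wedge a v = 0) \<longleftrightarrow> a = 0" using wz1 by auto
  have GZ: "\<And>x. x \<in> ?G \<Longrightarrow> fst x = 0 \<Longrightarrow> x \<in> ?Z"
    by (auto simp: G_mem Z_mem)
  have a1: "aseries ?G ?br J (Suc 0) = Z1"
  proof (intro set_eqI iffI)
    fix x assume "x \<in> aseries ?G ?br J (Suc 0)"
    then have xG: "x \<in> ?G" and h1: "\<forall>v. wedge (fst x) v = 0" and h2: "\<forall>v. wedge (fst (J x)) v = 0"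
      unfolding as_suc by (auto simp: zero_prod_def aseries.simps(1))
    then have "fst x = 0" "fst (J x) = 0" using wz by auto
    then show "x \<in> Z1" using GZ xG unfolding Z1_def by auto
  next
    fix x assume "x \<in> Z1"
    then have "x \<in> ?Z" "fst (J x) = 0" unfolding Z1_def by auto
    then show "x \<in> aseries ?G ?br J (Suc 0)" unfolding as_suc using ZG by (auto simp: Z_mem zero_prod_def aseries.simps(1))
  qed
  have sZ1: "subspace Z1"
    unfolding subspace_def
  proof (intro conjI ballI allI)
    show "0 \<in> Z1" unfolding Z1_def using J0 subspace_0[OF sZ] by simp
  next
    fix x y assume xy: "x \<in> Z1" "y \<in> Z1"
    then have "x \<in> ?G" "y \<in> ?G" using ZG unfolding Z1_def by auto
    then have "J (x + y) = J x + J y" using Jadd by blast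
    then show "x + y \<in> Z1" using xy sZ unfolding Z1_def by (simp add: subspace_add)
  next
    fix c :: real and x assume x: "x \<in> Z1"
    then have "x \<in> ?G" using ZG unfolding Z1_def by auto
    then have "J (c *\<^sub>R x) = c *\<^sub>R J x" using Jsc by blast
    then show "c *\<^sub>R x \<in> Z1" using x sZ unfolding Z1_def by (simp add: subspace_scale)
  qed
  have JZ1: "\<forall>x\<in>Z1. J x \<in> Z1"
  proof
    fix x assume x: "x \<in> Z1"
    then have "J x \<in> ?G" "fst (J x) = 0" using JG ZG unfolding Z1_def by auto
    then have "J x \<in> ?Z" by (rule GZ)
    moreover have "fst (J (J x)) = 0" using x JJ ZG unfolding Z1_def by (auto simp: Z_mem)
    ultimately show "J x \<in> Z1" unfolding Z1_def by simp
  qed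
  have Z1Z: "Z1 \<subseteq> ?Z" unfolding Z1_def by auto
  have evZ1: "even (dim Z1)"
    by (rule even_dim_cs[OF sZ1 JZ1]) (use Jadd Jsc JJ Z1Z ZG in blast)+
  have evG: "even (dim ?G)"
    by (rule even_dim_cs[OF sG JG Jadd Jsc JJ])
  have dGZ: "dim ?G = CARD('r) + dim ?Z" by (simp add: dim_G dim_Z)
  have one_notZ: "((1::real^'r), 0) \<notin> ?Z" by (simp add: Z_mem)
  have one_G: "((1::real^'r), 0) \<in> ?G" by (simp add: G_mem)
  have a1G: "aseries ?G ?br J (Suc 0) \<noteq> ?G" using a1 Z1Z one_notZ one_G by auto
  have ZJZ: "?Z \<inter> J ` ?Z = Z1"
  proof
    show "?Z \<inter> J ` ?Z \<subseteq> Z1"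
    proof
      fix x assume "x \<in> ?Z \<inter> J ` ?Z"
      then obtain y where y: "y \<in> ?Z" "x = J y" "x \<in> ?Z" by auto
      then have "J x = - y" using JJ ZG by auto
      then show "x \<in> Z1" using y by (simp add: Z1_def Z_mem)
    qed
  next
    show "Z1 \<subseteq> ?Z \<inter> J ` ?Z"
    proof
      fix x assume x: "x \<in> Z1"
      then have Jx: "J x \<in> Z1" using JZ1 by auto
      have JxG: "J x \<in> ?G" "x \<in> ?G" using Jx x Z1Z ZG by auto
      have "J (- J x) = - J (J x)" using Jsc[rule_format, OF JxG(1), of "-1"] by simp
      also have "\<dots> = x" using JJ JxG(2) by simp
      finally have "J (- J x) = x" .
      moreover have "- J x \<in> ?Z" using Jx Z1Z sZ by (auto simp: subspace_neg)
      ultimately show "x \<in> ?Z \<inter> J ` ?Z" using x Z1Z by (metis IntI image_eqI subsetD)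
    qed
  qed
  show "\<not>(\<exists>x\<in>?Z. fst (J x) \<noteq> 0) \<Longrightarrow> step_cs ?G ?br J 2 \<and> even CARD('r)"
  proof -
    assume "\<not>(\<exists>x\<in>?Z. fst (J x) \<noteq> 0)"
    then have Z1e: "Z1 = ?Z" unfolding Z1_def by auto
    have "even CARD('r)" using evZ1 evG dGZ Z1e by simp
    moreover have a2: "aseries ?G ?br J (Suc (Suc 0)) = ?G"
      using a1 Z1e by (subst as_suc) (auto simp: Z_mem wedge_antisym)
    moreover have "step_cs ?G ?br J 2"
      unfolding step_cs_def
    proof (intro conjI allI impI)
      show "0 < (2::nat)" by simp
      show "aseries ?G ?br J 2 = ?G" using a2 by (simp only: numeral_2_eq_2)
      fix s :: nat assume "0 < s \<and> s < 2"
      then have "s = Suc 0" by arith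
      then show "aseries ?G ?br J s \<noteq> ?G" using a1G by blast
    qed
    ultimately show ?thesis by simp
  qed
  show "(\<exists>x\<in>?Z. fst (J x) \<noteq> 0) \<Longrightarrow> step_cs ?G ?br J 3 \<and> dim ?Z = dim (?Z \<inter> J ` ?Z) + 1 \<and> odd CARD('r)"
  proof -
    assume "\<exists>x\<in>?Z. fst (J x) \<noteq> 0"
    then obtain x0 where x0: "x0 \<in> ?Z" "fst (J x0) \<noteq> 0" by auto
    have spZ1: "span Z1 = Z1" using sZ1 by (simp add: span_eq_iff)
    have "x0 \<notin> Z1" using x0 by (simp add: Z1_def)
    then have x0n: "x0 \<notin> span Z1" by (subst spZ1)
    have Zsub: "?Z \<subseteq> span (insert x0 Z1)"
    proof
      fix x assume x: "x \<in> ?Z"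
      obtain c where c: "fst (J x) = c *\<^sub>R fst (J x0)"
        using wedge_dep[OF key1[OF x0(1) x] x0(2)] by auto
      have m: "x - c *\<^sub>R x0 \<in> ?Z" using x x0 sZ by (simp add: subspace_diff subspace_scale)
      have xG: "x \<in> ?G" "x0 \<in> ?G" using x x0 ZG by auto
      then have cG: "c *\<^sub>R x0 \<in> ?G" using sG by (metis subspace_scale)
      have "J (x - c *\<^sub>R x0) = J x - J (c *\<^sub>R x0)" using Jdiff[OF xG(1) cG] .
      also have "\<dots> = J x - c *\<^sub>R J x0" using Jsc xG(2) by simp
      finally have "J (x - c *\<^sub>R x0) = J x - c *\<^sub>R J x0" .
      then have "x - c *\<^sub>R x0 \<in> Z1" using m c by (simp add: Z1_def)
      then show "x \<in> span (insert x0 Z1)"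
        using span_insert[of x0 Z1] spZ1 by auto
    qed
    have "span ?Z = span (insert x0 Z1)"
    proof
      show "span ?Z \<subseteq> span (insert x0 Z1)" using Zsub by (simp add: span_minimal)
      show "span (insert x0 Z1) \<subseteq> span ?Z" using x0 Z1Z by (intro span_mono) auto
    qed
    then have dZ: "dim ?Z = dim Z1 + 1"
      by (metis dim_span dim_insert x0n)
    have oddr: "odd CARD('r)" using dZ dGZ evG evZ1 by simp
    have Za2: "?Z \<subseteq> aseries ?G ?br J (Suc (Suc 0))"
    proof
      fix x assume x: "x \<in> ?Z"
      have "\<And>v. (0, wedge (fst (J x)) v) \<in> Z1"
        using key2[OF x] by (simp add: Z1_def Z_mem wedge_antisym)
      moreover have "(0::(real^'r) \<times> (real^'r^'r)) \<in> Z1" using sZ1 subspace_0 by blast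
      ultimately show "x \<in> aseries ?G ?br J (Suc (Suc 0))"
        using x ZG a1 by (subst as_suc) (auto simp: Z_mem zero_prod_def)
    qed
    have a3: "aseries ?G ?br J (Suc (Suc (Suc 0))) = ?G"
    proof -
      have "\<And>a v. (0, wedge a v) \<in> aseries ?G ?br J (Suc (Suc 0))"
        using Za2 by (auto simp: Z_mem wedge_antisym)
      then show ?thesis by (subst as_suc) auto
    qed
    have a2G: "aseries ?G ?br J (Suc (Suc 0)) \<noteq> ?G"
    proof
      assume a2: "aseries ?G ?br J (Suc (Suc 0)) = ?G"
      have W: "\<And>v v'. (0, wedge v v') \<in> Z1"
      proof -
        fix v v' :: "real^'r"
        have "(v, 0) \<in> aseries ?G ?br J (Suc (Suc 0))" using a2 by (simp add: G_mem)
        then show "(0, wedge v v') \<in> Z1" using a1 by (subst (asm) as_suc) auto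
      qed
      obtain w0 where w0: "x0 = (0, w0)" "transpose w0 = - w0" using x0(1)
        by (metis Z_mem prod.collapse)
      let ?f = "\<lambda>p::'r \<times> 'r. (w0 $ fst p $ snd p / 2) *\<^sub>R ((0::real^'r), wedge (axis (fst p) 1) (axis (snd p) (1::real)))"
      have "x0 = (\<Sum>p\<in>UNIV. ?f p)"
        using antisym_span[OF w0(2)] w0(1) by (simp add: prod_eq_iff fst_sum snd_sum)
      moreover have "(\<Sum>p\<in>UNIV. ?f p) \<in> Z1"
      proof (rule subspace_sum[OF sZ1])
        fix p :: "'r \<times> 'r"
        show "?f p \<in> Z1" by (rule subspace_scale[OF sZ1 W])
      qed
      ultimately show False using x0 Z1_def by auto
    qed
    have "step_cs ?G ?br J 3"
      unfolding step_cs_def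
    proof (intro conjI allI impI)
      show "0 < (3::nat)" by simp
      show "aseries ?G ?br J 3 = ?G" using a3 by (simp only: numeral_3_eq_3)
      fix s :: nat assume "0 < s \<and> s < 3"
      then have "s = Suc 0 \<or> s = Suc (Suc 0)" by arith
      then show "aseries ?G ?br J s \<noteq> ?G" using a1G a2G by blast
    qed
    then show ?thesis using dZ ZJZ oddr by simp
  qed
qed



theorem mainTheorem9:
  shows "(CARD('r) mod 4 = 0 \<longrightarrow>
            (\<forall>J. complex_structure (free2_carrier :: ((real^'r) \<times> (real^'r^'r)) set) free2_bracket J
                 \<longrightarrow> step_cs (free2_carrier :: ((real^'r) \<times> (real^'r^'r)) set) free2_bracket J 2))
       \<and> (CARD('r) mod 4 = 3 \<longrightarrow>
            (\<forall>J. complex_structure (free2_carrier :: ((real^'r) \<times> (real^'r^'r)) set) free2_bracket J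
                 \<longrightarrow> step_cs (free2_carrier :: ((real^'r) \<times> (real^'r^'r)) set) free2_bracket J 3
                     \<and> dim (free2_center :: ((real^'r) \<times> (real^'r^'r)) set)
                         = dim ((free2_center :: ((real^'r) \<times> (real^'r^'r)) set) \<inter> J ` free2_center) + 1))"
proof (intro conjI impI allI)
  have pos: "0 < CARD('r)" by simp
  fix J :: "(real^'r) \<times> (real^'r^'r) \<Rightarrow> (real^'r) \<times> (real^'r^'r)"
  {
    assume m: "CARD('r) mod 4 = 0" and cs: "complex_structure free2_carrier free2_bracket J"
    have r2: "CARD('r) \<ge> 2" using m pos by presburger
    have ev: "even CARD('r)" using m by presburger
    show "step_cs free2_carrier free2_bracket J 2"
    proof (cases "\<exists>x\<in>free2_center. fst (J x) \<noteq> 0")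
      case True
      then show ?thesis using cs_facts(2)[OF cs r2] ev by blast
    next
      case False
      then show ?thesis using cs_facts(1)[OF cs r2] by blast
    qed
  }
  {
    assume m: "CARD('r) mod 4 = 3" and cs: "complex_structure free2_carrier free2_bracket J"
    have r2: "CARD('r) \<ge> 2" using m pos by presburger
    have od: "odd CARD('r)" using m by presburger
    have T: "\<exists>x\<in>free2_center. fst (J x) \<noteq> 0"
      using cs_facts(1)[OF cs r2] od by blast
    show "step_cs free2_carrier free2_bracket J 3"
      using cs_facts(2)[OF cs r2 T] by blast
    show "dim (free2_center :: ((real^'r) \<times> (real^'r^'r)) set) = dim ((free2_center :: ((real^'r) \<times> (real^'r^'r)) set) \<inter> J ` free2_center) + 1"
      using cs_facts(2)[OF cs r2 T] by blast
  }
qed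

end
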